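(* Let $G$ be a connected oriented graph derived from a Burling tree $(T,r,\ell,c)$, and suppose that $G$ has no cut vertex and no vertex of degree at most $1$. Let $S$ be the top-set of $G$. Then: (i) $G[S]$ is an in-star with at least two leaves (so $G$ has a unique pivot and its in-neighbors in $G[S]$ are the antennas of $G$); (ii) all vertices of $S\setminus\{v\}$ are sources of $G$, where $v$ is the unique sink of $G[S]$; (iii) the pivot of $G$ is an ancestor in $T$ of all vertices of $V(G)\setminus S$.
   Context: Oriented graphs are finite, without loops, multiple arcs or pairs of opposite arcs; connectivity, degree and cut vertices refer to the underlying graph. In a rooted tree $T$ with root $r$, each non-root vertex $v$ has a parent $p(v)$; children, leaves, ancestors and descendants are as usual. A branch is a sequence $v_1\dots v_k$ ($k\ge0$) with $v_i$ the parent of $v_{i+1}$; it starts at $v_1$. A Burling tree is a 4-tuple $(T,r,\ell,c)$: $T$ a rooted tree with root $r$; $\ell$ assigns to each non-leaf vertex $v$ one of its children $\ell(v)$ (the last-born of $v$); $c$ assigns to every vertex $v$ that is neither the root nor a last-born the vertex-set of a (possibly empty) branch starting at $\ell(p(v))$, and $c(v)=\emptyset$ if $v$ is the root or a last-born. The oriented graph fully derived from it has vertex-set $V(T)$ and an arc $uv$ iff $v\in c(u)$; an oriented graph is derived from the Burling tree if it is an induced subgraph of the fully derived one. The top-set of $G$ (with respect to $T$) is the set of vertices $v$ of $G$ such that $v$ is the only vertex of $G$ on the branch of $T$ from $r$ to $v$. A pivot of $G$ is a sink of $G[S]$ and an antenna of $G$ is a source of $G[S]$, where $S$ is the top-set.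 An in-tree is an oriented graph obtained from a rooted tree by orienting every edge towards the root; an in-star is an in-tree whose unique sink is adjacent to all other vertices; its leaves are its vertices other than the sink. *)

theory Defs
  imports Main
begin

text \<open>A rooted tree on the finite vertex set V with root r and parent function p
  (the value p r is irrelevant): every vertex reaches the root by iterating p.\<close>
definition rooted_tree :: "'a set \<Rightarrow> 'a \<Rightarrow> ('a \<Rightarrow> 'a) \<Rightarrow> bool" where
  "rooted_tree V r p \<longleftrightarrow> finite V \<and> r \<in> V \<and> (\<forall>v\<in>V. v \<noteq> r \<longrightarrow> p v \<in> V)
     \<and> (\<forall>v\<in>V. \<exists>n. (p ^^ n) v = r)"

text \<open>u is a proper ancestor of v (parents are only taken at non-root vertices).\<close>
definition ancestor :: "'a \<Rightarrow> ('a \<Rightarrow> 'a) \<Rightarrow> 'a \<Rightarrow> 'a \<Rightarrow> bool" where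
  "ancestor r p u v \<longleftrightarrow> (\<exists>n>0. (p ^^ n) v = u \<and> (\<forall>k<n. (p ^^ k) v \<noteq> r))"

definition ancestor_eq :: "'a \<Rightarrow> ('a \<Rightarrow> 'a) \<Rightarrow> 'a \<Rightarrow> 'a \<Rightarrow> bool" where
  "ancestor_eq r p u v \<longleftrightarrow> u = v \<or> ancestor r p u v"

definition children :: "'a set \<Rightarrow> 'a \<Rightarrow> ('a \<Rightarrow> 'a) \<Rightarrow> 'a \<Rightarrow> 'a set" where
  "children V r p v = {w \<in> V. w \<noteq> r \<and> p w = v}"

definition is_leaf :: "'a set \<Rightarrow> 'a \<Rightarrow> ('a \<Rightarrow> 'a) \<Rightarrow> 'a \<Rightarrow> bool" where
  "is_leaf V r p v \<longleftrightarrow> children V r p v = {}"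

definition branch_set :: "'a set \<Rightarrow> 'a \<Rightarrow> ('a \<Rightarrow> 'a) \<Rightarrow> 'a \<Rightarrow> 'a set \<Rightarrow> bool" where
  "branch_set V r p x B \<longleftrightarrow> B = {} \<or>
     (\<exists>y\<in>V. ancestor_eq r p x y \<and> B = {z. ancestor_eq r p x z \<and> ancestor_eq r p z y})"

definition last_born :: "'a \<Rightarrow> ('a \<Rightarrow> 'a) \<Rightarrow> ('a \<Rightarrow> 'a) \<Rightarrow> 'a \<Rightarrow> bool" where
  "last_born r p l v \<longleftrightarrow> v \<noteq> r \<and> l (p v) = v"

definition burling_tree ::
  "'a set \<Rightarrow> 'a \<Rightarrow> ('a \<Rightarrow> 'a) \<Rightarrow> ('a \<Rightarrow> 'a) \<Rightarrow> ('a \<Rightarrow> 'a set) \<Rightarrow> bool" where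
  "burling_tree V r p l c \<longleftrightarrow> rooted_tree V r p
     \<and> (\<forall>v\<in>V. \<not> is_leaf V r p v \<longrightarrow> l v \<in> children V r p v)
     \<and> (\<forall>v\<in>V. v \<noteq> r \<and> \<not> last_born r p l v \<longrightarrow> branch_set V r p (l (p v)) (c v))
     \<and> (\<forall>v\<in>V. (v = r \<or> last_born r p l v) \<longrightarrow> c v = {})"

definition arc :: "('a \<Rightarrow> 'a set) \<Rightarrow> 'a set \<Rightarrow> 'a \<Rightarrow> 'a \<Rightarrow> bool" where
  "arc c X u v \<longleftrightarrow> u \<in> X \<and> v \<in> X \<and> v \<in> c u"

definition adj :: "('a \<Rightarrow> 'a \<Rightarrow> bool) \<Rightarrow> 'a \<Rightarrow> 'a \<Rightarrow> bool" where
  "adj A u v \<longleftrightarrow> A u v \<or> A v u"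

definition connected_on :: "('a \<Rightarrow> 'a \<Rightarrow> bool) \<Rightarrow> 'a set \<Rightarrow> bool" where
  "connected_on A Y \<longleftrightarrow> Y \<noteq> {} \<and>
     (\<forall>u\<in>Y. \<forall>v\<in>Y. (u, v) \<in> {(a, b). a \<in> Y \<and> b \<in> Y \<and> adj A a b}\<^sup>*)"

definition cut_vertex :: "('a \<Rightarrow> 'a \<Rightarrow> bool) \<Rightarrow> 'a set \<Rightarrow> 'a \<Rightarrow> bool" where
  "cut_vertex A Y v \<longleftrightarrow> v \<in> Y \<and> (\<exists>a\<in>Y - {v}. \<exists>b\<in>Y - {v}.
     (a, b) \<notin> {(x, y). x \<in> Y - {v} \<and> y \<in> Y - {v} \<and> adj A x y}\<^sup>*)"

definition degree :: "('a \<Rightarrow> 'a \<Rightarrow> bool) \<Rightarrow> 'a set \<Rightarrow> 'a \<Rightarrow> nat" where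
  "degree A Y v = card {u \<in> Y. adj A v u}"

definition is_sink :: "('a \<Rightarrow> 'a \<Rightarrow> bool) \<Rightarrow> 'a set \<Rightarrow> 'a \<Rightarrow> bool" where
  "is_sink A Y v \<longleftrightarrow> v \<in> Y \<and> (\<forall>w\<in>Y. \<not> A v w)"

definition is_source :: "('a \<Rightarrow> 'a \<Rightarrow> bool) \<Rightarrow> 'a set \<Rightarrow> 'a \<Rightarrow> bool" where
  "is_source A Y v \<longleftrightarrow> v \<in> Y \<and> (\<forall>w\<in>Y. \<not> A w v)"

definition in_tree :: "('a \<Rightarrow> 'a \<Rightarrow> bool) \<Rightarrow> 'a set \<Rightarrow> bool" where
  "in_tree A Y \<longleftrightarrow> (\<exists>rt q. rooted_tree Y rt q \<and>
     (\<forall>u\<in>Y. \<forall>w\<in>Y. A u w \<longleftrightarrow> (u \<noteq> rt \<and> w = q u)))"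

definition in_star_with_sink :: "('a \<Rightarrow> 'a \<Rightarrow> bool) \<Rightarrow> 'a set \<Rightarrow> 'a \<Rightarrow> bool" where
  "in_star_with_sink A Y s \<longleftrightarrow> in_tree A Y \<and> {v. is_sink A Y v} = {s}
     \<and> (\<forall>u\<in>Y - {s}. adj A u s)"

definition top_set :: "'a \<Rightarrow> ('a \<Rightarrow> 'a) \<Rightarrow> 'a set \<Rightarrow> 'a set" where
  "top_set r p X = {v \<in> X. {u. ancestor_eq r p u v} \<inter> X = {v}}"

definition pivots :: "'a \<Rightarrow> ('a \<Rightarrow> 'a) \<Rightarrow> ('a \<Rightarrow> 'a set) \<Rightarrow> 'a set \<Rightarrow> 'a set" where
  "pivots r p c X = {v. is_sink (arc c (top_set r p X)) (top_set r p X) v}"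

definition antennas :: "'a \<Rightarrow> ('a \<Rightarrow> 'a) \<Rightarrow> ('a \<Rightarrow> 'a set) \<Rightarrow> 'a set \<Rightarrow> 'a set" where
  "antennas r p c X = {v. is_source (arc c (top_set r p X)) (top_set r p X) v}"

end

theory Submission
  imports Defs
begin


lemma funpow_comb: "(f ^^ a) ((f ^^ b) v) = (f ^^ (a + b)) v"
  by (simp add: funpow_add)

locale BT =
  fixes V :: "'a set" and r :: 'a and p l :: "'a \<Rightarrow> 'a" and c :: "'a \<Rightarrow> 'a set"
  assumes bt: "burling_tree V r p l c"
begin

lemma rt: "rooted_tree V r p" using bt unfolding burling_tree_def by blast
lemma finV: "finite V" using rt unfolding rooted_tree_def by simp
lemma rV: "r \<in> V" using rt unfolding rooted_tree_def by simp
lemma pV: "v \<in> V \<Longrightarrow> v \<noteq> r \<Longrightarrow> p v \<in> V" using rt unfolding rooted_tree_def by simp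
lemma reach: "v \<in> V \<Longrightarrow> \<exists>n. (p^^n) v = r" using rt unfolding rooted_tree_def by simp

definition dep :: "'a \<Rightarrow> nat" where "dep v = (LEAST n. (p^^n) v = r)"

lemma dep_r: "v \<in> V \<Longrightarrow> (p^^dep v) v = r"
  unfolding dep_def by (rule LeastI_ex, rule reach)

lemma dep_less: "k < dep v \<Longrightarrow> (p^^k) v \<noteq> r"
  unfolding dep_def using not_less_Least by blast

lemma dep_root: "dep r = 0"
  unfolding dep_def by (rule Least_equality) auto

lemma iter_V: "v \<in> V \<Longrightarrow> k \<le> dep v \<Longrightarrow> (p^^k) v \<in> V"
proof (induction k)
  case 0 then show ?case by simp
next
  case (Suc k)
  then have "(p^^k) v \<in> V" "(p^^k) v \<noteq> r" using dep_less by auto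
  then show ?case using pV by simp
qed

lemma dep_iter: assumes v: "v \<in> V" and n: "n \<le> dep v"
  shows "dep ((p^^n) v) = dep v - n"
proof -
  have "(LEAST m. (p^^m) ((p^^n) v) = r) = dep v - n"
  proof (rule Least_equality)
    show "(p^^(dep v - n)) ((p^^n) v) = r" using dep_r[OF v] n by (simp add: funpow_comb)
  next
    fix m assume "(p^^m) ((p^^n) v) = r"
    then have "(p^^(m+n)) v = r" by (simp add: funpow_comb)
    then show "dep v - n \<le> m" using dep_less[of "m+n" v] by linarith
  qed
  thus ?thesis unfolding dep_def .
qed

definition ae :: "'a \<Rightarrow> 'a \<Rightarrow> bool" where
  "ae a b \<longleftrightarrow> (\<exists>n \<le> dep b. (p^^n) b = a)"

lemma ancestor_iff: "b \<in> V \<Longrightarrow> ancestor r p a b \<longleftrightarrow> (\<exists>n. 0 < n \<and> n \<le> dep b \<and> (p^^n) b = a)"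
  unfolding ancestor_def
proof
  assume b: "b \<in> V" and "\<exists>n>0. (p ^^ n) b = a \<and> (\<forall>k<n. (p ^^ k) b \<noteq> r)"
  then obtain n where n: "n > 0" "(p ^^ n) b = a" "\<forall>k<n. (p ^^ k) b \<noteq> r" by blast
  have "n \<le> dep b" using n(3) dep_r[OF b] by (metis not_le)
  then show "\<exists>n. 0 < n \<and> n \<le> dep b \<and> (p^^n) b = a" using n by blast
next
  assume "\<exists>n. 0 < n \<and> n \<le> dep b \<and> (p^^n) b = a"
  then show "\<exists>n>0. (p ^^ n) b = a \<and> (\<forall>k<n. (p ^^ k) b \<noteq> r)"
    using dep_less by (metis less_le_trans)
qed

lemma ancestor_eq_iff: "b \<in> V \<Longrightarrow> ancestor_eq r p a b \<longleftrightarrow> ae a b"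
proof -
  assume b: "b \<in> V"
  show ?thesis unfolding ancestor_eq_def ae_def ancestor_iff[OF b]
  proof
    assume "a = b \<or> (\<exists>n. 0 < n \<and> n \<le> dep b \<and> (p ^^ n) b = a)"
    then show "\<exists>n\<le>dep b. (p ^^ n) b = a" by (metis funpow_0 le0)
  next
    assume "\<exists>n\<le>dep b. (p ^^ n) b = a"
    then obtain n where "n \<le> dep b" "(p ^^ n) b = a" by blast
    then show "a = b \<or> (\<exists>n. 0 < n \<and> n \<le> dep b \<and> (p ^^ n) b = a)"
      by (cases n) auto
  qed
qed

lemma ancestor_iff2: "b \<in> V \<Longrightarrow> ancestor r p a b \<longleftrightarrow> ae a b \<and> a \<noteq> b"
proof -
  assume b: "b \<in> V"
  show ?thesis unfolding ae_def ancestor_iff[OF b]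
  proof
    assume "\<exists>n. 0 < n \<and> n \<le> dep b \<and> (p ^^ n) b = a"
    then obtain n where n: "0 < n" "n \<le> dep b" "(p ^^ n) b = a" by blast
    have "dep a = dep b - n" using dep_iter[OF b n(2)] n(3) by simp
    then have "a \<noteq> b" using n by auto
    then show "(\<exists>n\<le>dep b. (p ^^ n) b = a) \<and> a \<noteq> b" using n by blast
  next
    assume "(\<exists>n\<le>dep b. (p ^^ n) b = a) \<and> a \<noteq> b"
    then obtain n where "n \<le> dep b" "(p ^^ n) b = a" "a \<noteq> b" by blast
    then show "\<exists>n. 0 < n \<and> n \<le> dep b \<and> (p ^^ n) b = a"
      by (cases n) auto
  qed
qed

lemma ae_refl: "ae b b" unfolding ae_def by (rule exI[of _ 0]) simp

lemma ae_V: "b \<in> V \<Longrightarrow> ae a b \<Longrightarrow> a \<in> V"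
  unfolding ae_def using iter_V by blast

lemma ae_dep: "b \<in> V \<Longrightarrow> ae a b \<Longrightarrow> dep a \<le> dep b"
  unfolding ae_def using dep_iter by auto

lemma ae_dep_eq: "b \<in> V \<Longrightarrow> ae a b \<Longrightarrow> dep a = dep b \<Longrightarrow> a = b"
proof -
  assume b: "b \<in> V" and "ae a b" and e: "dep a = dep b"
  then obtain n where n: "n \<le> dep b" "(p^^n) b = a" unfolding ae_def by blast
  have "dep a = dep b - n" using dep_iter[OF b n(1)] n(2) by simp
  then have "n = 0" using e n(1) by simp
  then show "a = b" using n by simp
qed

lemma ae_trans: assumes "z \<in> V" "ae a b" "ae b z" shows "ae a z"
proof -
  obtain n where n: "n \<le> dep z" "(p^^n) z = b" using assms unfolding ae_def by blast
  obtain m where m: "m \<le> dep b" "(p^^m) b = a" using assms unfolding ae_def by blast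
  have "dep b = dep z - n" using dep_iter[OF assms(1) n(1)] n(2) by simp
  then have "m + n \<le> dep z" using m n by simp
  moreover have "(p^^(m+n)) z = a" using m n funpow_comb[where f=p and a=m and b=n and v=z] by simp
  ultimately show ?thesis unfolding ae_def by blast
qed

lemma ae_cmp: assumes "x \<in> V" "ae a x" "ae b x" shows "ae a b \<or> ae b a"
proof -
  obtain n where n: "n \<le> dep x" "(p^^n) x = a" using assms unfolding ae_def by blast
  obtain m where m: "m \<le> dep x" "(p^^m) x = b" using assms unfolding ae_def by blast
  show ?thesis
  proof (cases "n \<le> m")
    case True
    have "(p^^(m-n)) a = b" using n m True funpow_comb[where f=p and a="m-n" and b=n and v=x] by simp
    moreover have "m - n \<le> dep a" using dep_iter[OF assms(1) n(1)] n m by simp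
    ultimately show ?thesis unfolding ae_def by blast
  next
    case False
    have "(p^^(n-m)) b = a" using n m False funpow_comb[where f=p and a="n-m" and b=m and v=x] by simp
    moreover have "n - m \<le> dep b" using dep_iter[OF assms(1) m(1)] n m by simp
    ultimately show ?thesis unfolding ae_def by blast
  qed
qed

lemma ae_antisym: "a \<in> V \<Longrightarrow> b \<in> V \<Longrightarrow> ae a b \<Longrightarrow> ae b a \<Longrightarrow> a = b"
  using ae_dep ae_dep_eq by (meson le_antisym)

lemma ae_parent: assumes "b \<in> V" "b \<noteq> r" shows "ae (p b) b" "dep b = Suc (dep (p b))"
proof -
  have "dep b \<noteq> 0" using assms dep_r[OF assms(1)] by (metis funpow_0)
  then show "ae (p b) b" unfolding ae_def by (intro exI[of _ 1]) auto
  show "dep b = Suc (dep (p b))" using dep_iter[OF assms(1), of 1] \<open>dep b \<noteq> 0\<close> by simp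
qed

lemma ae_proper: assumes "b \<in> V" "ae a b" "a \<noteq> b" shows "ae a (p b)" "b \<noteq> r"
proof -
  obtain n where n: "n \<le> dep b" "(p^^n) b = a" using assms unfolding ae_def by blast
  have "n \<noteq> 0" using n assms by (metis funpow_0)
  then have "dep b \<noteq> 0" using n by auto
  then show br: "b \<noteq> r" using dep_root by auto
  have "(p^^(n-1)) (p b) = a" using n \<open>n \<noteq> 0\<close>
    by (metis Suc_diff_1 bot_nat_0.not_eq_extremum funpow_Suc_right o_apply)
  moreover have "n - 1 \<le> dep (p b)" using ae_parent[OF assms(1) br] n by simp
  ultimately show "ae a (p b)" unfolding ae_def by blast
qed


lemma sib: assumes u: "u \<in> V" "u \<noteq> r" "\<not> last_born r p l u"
  shows "l (p u) \<in> V" "l (p u) \<noteq> r" "p (l (p u)) = p u" "dep (l (p u)) = dep u"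
    "l (p u) \<noteq> u" "c (l (p u)) = {}"
proof -
  have pu: "p u \<in> V" using pV u by simp
  have "u \<in> children V r p (p u)" using u unfolding children_def by simp
  then have "\<not> is_leaf V r p (p u)" unfolding is_leaf_def by blast
  then have m: "l (p u) \<in> children V r p (p u)" using bt pu unfolding burling_tree_def by blast
  then show m1: "l (p u) \<in> V" and m2: "l (p u) \<noteq> r" and m3: "p (l (p u)) = p u"
    unfolding children_def by auto
  show "dep (l (p u)) = dep u" using ae_parent(2)[OF m1 m2] ae_parent(2)[OF u(1,2)] m3 by simp
  show "l (p u) \<noteq> u" using u unfolding last_born_def by auto
  have "last_born r p l (l (p u))" unfolding last_born_def using m2 m3 by simp
  then show "c (l (p u)) = {}" using bt m1 unfolding burling_tree_def by blast
qed

lemma arcD: assumes u: "u \<in> V" and v: "v \<in> c u"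
  shows "u \<noteq> r" "\<not> last_born r p l u" "\<exists>y\<in>V. \<forall>z. z \<in> c u \<longleftrightarrow> ae (l (p u)) z \<and> ae z y"
proof -
  show ur: "u \<noteq> r" using bt u v unfolding burling_tree_def by blast
  show nl: "\<not> last_born r p l u" using bt u v unfolding burling_tree_def by blast
  have "branch_set V r p (l (p u)) (c u)" using bt u ur nl unfolding burling_tree_def by blast
  then obtain y where y: "y \<in> V" "ancestor_eq r p (l (p u)) y"
      "c u = {z. ancestor_eq r p (l (p u)) z \<and> ancestor_eq r p z y}"
    using v unfolding branch_set_def by blast
  have "\<forall>z. z \<in> c u \<longleftrightarrow> ae (l (p u)) z \<and> ae z y"
  proof
    fix z
    show "z \<in> c u \<longleftrightarrow> ae (l (p u)) z \<and> ae z y"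
    proof
      assume "z \<in> c u"
      then have z: "ancestor_eq r p (l (p u)) z" "ancestor_eq r p z y" using y by auto
      then have zy: "ae z y" using ancestor_eq_iff[OF y(1)] by simp
      then have "z \<in> V" using ae_V y(1) by blast
      then show "ae (l (p u)) z \<and> ae z y" using z ancestor_eq_iff zy by blast
    next
      assume z: "ae (l (p u)) z \<and> ae z y"
      then have "z \<in> V" using ae_V y(1) by blast
      then show "z \<in> c u" using y z ancestor_eq_iff by blast
    qed
  qed
  then show "\<exists>y\<in>V. \<forall>z. z \<in> c u \<longleftrightarrow> ae (l (p u)) z \<and> ae z y" using y(1) by blast
qed

lemma arc_m: assumes "u \<in> V" "v \<in> c u" shows "ae (l (p u)) v" "v \<in> V"
proof -
  obtain y where y: "y \<in> V" "\<forall>z. z \<in> c u \<longleftrightarrow> ae (l (p u)) z \<and> ae z y" using arcD[OF assms] by blast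
  show "ae (l (p u)) v" using y assms by blast
  show "v \<in> V" using y assms ae_V by blast
qed

lemma arc_chain: assumes "u \<in> V" "v \<in> c u" "w \<in> c u" shows "ae v w \<or> ae w v"
proof -
  obtain y where y: "y \<in> V" "\<forall>z. z \<in> c u \<longleftrightarrow> ae (l (p u)) z \<and> ae z y" using arcD[OF assms(1,2)] by blast
  show ?thesis using ae_cmp[OF y(1)] y(2) assms by blast
qed

lemma arc_fill: assumes "u \<in> V" "v \<in> c u" "ae (l (p u)) t" "ae t v" shows "t \<in> c u"
proof -
  obtain y where y: "y \<in> V" "\<forall>z. z \<in> c u \<longleftrightarrow> ae (l (p u)) z \<and> ae z y" using arcD[OF assms(1,2)] by blast
  have "ae v y" using y assms by blast
  then have "ae t y" using ae_trans[OF y(1) assms(4)] by blast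
  then show ?thesis using y assms(3) by blast
qed

lemma arc_incomp: assumes u: "u \<in> V" and v: "v \<in> c u" shows "\<not> ae u v" "\<not> ae v u"
proof -
  have ar: "u \<noteq> r" "\<not> last_born r p l u" using arcD[OF u v] by auto
  note s = sib[OF u ar]
  have mv: "ae (l (p u)) v" and vV: "v \<in> V" using arc_m[OF u v] by auto
  show "\<not> ae u v"
  proof
    assume "ae u v"
    then have "ae u (l (p u)) \<or> ae (l (p u)) u" using ae_cmp[OF vV _ mv] by blast
    then show False using ae_dep_eq[OF s(1)] ae_dep_eq[OF u] s(4,5) by metis
  qed
  show "\<not> ae v u"
  proof
    assume "ae v u"
    then have "ae (l (p u)) u" using ae_trans[OF u mv] by blast
    then show False using ae_dep_eq[OF u] s(4,5) by metis
  qed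
qed

definition phi :: "'a \<Rightarrow> nat" where "phi x = 2 * dep x + (if c x = {} then 1 else 0)"

lemma arc_phi: assumes u: "u \<in> V" and v: "v \<in> c u" shows "phi u < phi v"
proof -
  have ar: "u \<noteq> r" "\<not> last_born r p l u" using arcD[OF u v] by auto
  note s = sib[OF u ar]
  have mv: "ae (l (p u)) v" and vV: "v \<in> V" using arc_m[OF u v] by auto
  have "dep u \<le> dep v" using ae_dep[OF vV mv] s(4) by simp
  moreover have "dep v = dep u \<Longrightarrow> c v = {}" using ae_dep_eq[OF vV mv] s(4,6) by simp
  moreover have "c u \<noteq> {}" using v by blast
  ultimately show ?thesis unfolding phi_def by (cases "dep v = dep u") auto
qed

end

locale BTX = BT + fixes X assumes XV: "X \<subseteq> V"
begin

abbreviation "TS \<equiv> top_set r p X"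
abbreviation "G \<equiv> arc c X"

lemma TS_iff: "t \<in> TS \<longleftrightarrow> t \<in> X \<and> (\<forall>u\<in>X. ae u t \<longrightarrow> u = t)"
proof
  assume "t \<in> TS"
  then have t: "t \<in> X" "{u. ancestor_eq r p u t} \<inter> X = {t}" unfolding top_set_def by auto
  have "t \<in> V" using t XV by auto
  then show "t \<in> X \<and> (\<forall>u\<in>X. ae u t \<longrightarrow> u = t)" using t ancestor_eq_iff by blast
next
  assume t: "t \<in> X \<and> (\<forall>u\<in>X. ae u t \<longrightarrow> u = t)"
  have tV: "t \<in> V" using t XV by auto
  have "{u. ancestor_eq r p u t} \<inter> X = {t}" using t ae_refl by (auto simp: ancestor_eq_iff[OF tV])
  then show "t \<in> TS" using t unfolding top_set_def by blast
qed

lemma TS_X: "t \<in> TS \<Longrightarrow> t \<in> X" using TS_iff by blast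

lemma top_exists: "x \<in> X \<Longrightarrow> \<exists>t\<in>TS. ae t x"
proof (induction "dep x" arbitrary: x rule: less_induct)
  case less
  show ?case
  proof (cases "x \<in> TS")
    case True then show ?thesis using ae_refl by blast
  next
    case False
    then obtain u where u: "u \<in> X" "ae u x" "u \<noteq> x" using TS_iff less.prems by blast
    have xV: "x \<in> V" using less.prems XV by auto
    have "dep u \<le> dep x" using ae_dep[OF xV u(2)] .
    moreover have "dep u \<noteq> dep x" using ae_dep_eq[OF xV u(2)] u(3) by blast
    ultimately have "dep u < dep x" by simp
    then obtain t where "t \<in> TS" "ae t u" using less.hyps u(1) by blast
    then show ?thesis using ae_trans[OF xV] u(2) by blast
  qed
qed

lemma top_unique: assumes "x \<in> X" "t1 \<in> TS" "t2 \<in> TS" "ae t1 x" "ae t2 x" shows "t1 = t2"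
proof -
  have xV: "x \<in> V" using assms XV by auto
  have "ae t1 t2 \<or> ae t2 t1" using ae_cmp[OF xV assms(4,5)] .
  then show ?thesis using assms(2,3) TS_iff by metis
qed

definition tau :: "'a \<Rightarrow> 'a" where "tau x = (THE t. t \<in> TS \<and> ae t x)"

lemma tau: assumes "x \<in> X" shows "tau x \<in> TS" "ae (tau x) x"
proof -
  have "\<exists>!t. t \<in> TS \<and> ae t x" using top_exists[OF assms] top_unique[OF assms] by blast
  then have "tau x \<in> TS \<and> ae (tau x) x" unfolding tau_def by (rule theI')
  then show "tau x \<in> TS" "ae (tau x) x" by auto
qed

lemma tau_eq: "x \<in> X \<Longrightarrow> t \<in> TS \<Longrightarrow> ae t x \<Longrightarrow> tau x = t"
  using tau top_unique by metis

lemma tau_top: "t \<in> TS \<Longrightarrow> tau t = t"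
  using tau_eq TS_X ae_refl by blast

lemma G_D: assumes "G a b" shows "a \<in> X" "b \<in> X" "b \<in> c a" "a \<in> V" "b \<in> V"
  using assms XV unfolding arc_def by auto

lemma F1: assumes "G a v" "G a w" "v \<in> TS" "w \<in> TS" shows "v = w"
proof -
  have "ae v w \<or> ae w v" using arc_chain G_D assms by metis
  then show ?thesis using assms TS_iff by metis
qed

lemma F3: assumes ab: "G a b" and ne: "tau a \<noteq> tau b" shows "a = tau a" "G (tau a) (tau b)"
proof -
  have aX: "a \<in> X" and bX: "b \<in> X" and bc: "b \<in> c a" and aV: "a \<in> V" and bV: "b \<in> V"
    using G_D[OF ab] by auto
  have ar: "a \<noteq> r" "\<not> last_born r p l a" using arcD[OF aV bc] by auto
  note s = sib[OF aV ar]
  have mb: "ae (l (p a)) b" using arc_m[OF aV bc] by auto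
  have ta: "tau a \<in> TS" "ae (tau a) a" using tau[OF aX] by auto
  show 1: "a = tau a"
  proof (rule ccontr)
    assume "a \<noteq> tau a"
    then have "ae (tau a) (p a)" using ae_proper(1)[OF aV ta(2)] by auto
    moreover have "ae (p a) (l (p a))" using ae_parent(1)[OF s(1) s(2)] s(3) by simp
    ultimately have "ae (tau a) (l (p a))" using ae_trans[OF s(1)] by blast
    then have "ae (tau a) b" using ae_trans[OF bV _ mb] by blast
    then have "tau b = tau a" using tau_eq[OF bX ta(1)] by blast
    then show False using ne by simp
  qed
  have tb: "tau b \<in> TS" "ae (tau b) b" using tau[OF bX] by auto
  have tbX: "tau b \<in> X" using TS_X tb by blast
  have aTS: "a \<in> TS" using 1 ta by simp
  have "ae (l (p a)) (tau b)"
  proof (rule ccontr)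
    assume n: "\<not> ae (l (p a)) (tau b)"
    then have "ae (tau b) (l (p a))" using ae_cmp[OF bV tb(2) mb] by blast
    moreover have "tau b \<noteq> l (p a)" using n ae_refl by metis
    ultimately have "ae (tau b) (p (l (p a)))" using ae_proper(1)[OF s(1)] by blast
    then have "ae (tau b) (p a)" using s(3) by simp
    then have "ae (tau b) a" using ae_trans[OF aV _ ae_parent(1)[OF aV ar(1)]] by blast
    then have "tau b = a" using aTS tbX TS_iff by blast
    then show False using ne 1 by simp
  qed
  then have "tau b \<in> c a" using arc_fill[OF aV bc _ tb(2)] by blast
  then show "G (tau a) (tau b)" using 1[symmetric] aX tbX unfolding arc_def by simp
qed

lemma G_phi: "G a b \<Longrightarrow> phi a < phi b" using arc_phi G_D by blast

lemma trancl_phi: "(a, b) \<in> {(a, b). G a b}\<^sup>+ \<Longrightarrow> phi a < phi b"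
proof (induction rule: trancl_induct)
  case (base y) then show ?case using G_phi by simp
next
  case (step y z) then show ?case using G_phi by fastforce
qed

end



locale BTG = BTX +
  assumes conn: "connected_on (arc c X) X"
    and nocut: "\<forall>v\<in>X. \<not> cut_vertex (arc c X) X v"
    and deg: "\<forall>v\<in>X. degree (arc c X) X v \<ge> 2"
begin

lemma K: assumes t: "t \<in> TS" and t1: "t1 \<in> TS" and tt1: "G t t1"
  shows "(\<forall>x\<in>X. tau x = t \<longrightarrow> x = t) \<and> (\<forall>a\<in>TS. \<not> G a t)"
proof -
  define R where "R = {(a,b). a \<in> TS \<and> b \<in> TS \<and> G a b}"
  define W where "W = {x \<in> X. (tau x, t) \<in> R\<^sup>*}"
  have tX: "t \<in> X" using TS_X t by blast
  have tW: "t \<in> W" using tX tau_top[OF t] unfolding W_def by simp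
  have edge: "x = t" if x: "x \<in> W" and y: "y \<in> X" "y \<notin> W" and a: "adj G x y" for x y
  proof -
    have xX: "x \<in> X" and rx: "(tau x, t) \<in> R\<^sup>*" using x unfolding W_def by auto
    have tauyx: "tau y \<noteq> tau x" using x y unfolding W_def by auto
    from a consider "G x y" | "G y x" unfolding adj_def by blast
    then show ?thesis
    proof cases
      case 1
      from F3[OF 1] tauyx have e: "x = tau x" "G (tau x) (tau y)" by auto
      show ?thesis
      proof (rule ccontr)
        assume "x \<noteq> t"
        then have "tau x \<noteq> t" using e by simp
        then obtain z where z: "(tau x, z) \<in> R" "(z, t) \<in> R\<^sup>*" using rx by (meson converse_rtranclE)
        have "z = tau y" using F1[OF _ e(2)] z(1) tau[OF y(1)] unfolding R_def by blast
        then have "y \<in> W" using z(2) y unfolding W_def by simp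
        then show False using y by simp
      qed
    next
      case 2
      from F3[OF 2] tauyx have "G (tau y) (tau x)" by auto
      then have "(tau y, tau x) \<in> R" using tau[OF y(1)] tau[OF xX] unfolding R_def by auto
      then have "(tau y, t) \<in> R\<^sup>*" using rx by (meson converse_rtrancl_into_rtrancl)
      then have "y \<in> W" using y unfolding W_def by simp
      then show ?thesis using y by simp
    qed
  qed
  have t1W: "t1 \<notin> W"
  proof
    assume "t1 \<in> W"
    then have "(t1, t) \<in> R\<^sup>*" using tau_top[OF t1] unfolding W_def by simp
    moreover have "(t, t1) \<in> R" using t t1 tt1 unfolding R_def by simp
    ultimately have "(t, t) \<in> R\<^sup>+" by (meson rtrancl_into_trancl2)
    moreover have "R \<subseteq> {(a, b). G a b}" unfolding R_def by auto
    ultimately have "(t, t) \<in> {(a, b). G a b}\<^sup>+" using trancl_mono by blast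
    then show False using trancl_phi by blast
  qed
  have t1X: "t1 \<in> X" using TS_X t1 by blast
  have t1t: "t1 \<noteq> t" using t1W tW by blast
  have Wt: "x = t" if xW: "x \<in> W" for x
  proof (rule ccontr)
    assume xt: "x \<noteq> t"
    have "\<not> cut_vertex G X t" using nocut tX by blast
    then have "(x, t1) \<in> {(a,b). a \<in> X - {t} \<and> b \<in> X - {t} \<and> adj G a b}\<^sup>*"
      using xW xt t1X t1t tX unfolding cut_vertex_def W_def by blast
    then have "t1 \<in> W"
    proof (induction rule: rtrancl_induct)
      case base show ?case using xW .
    next
      case (step y z)
      then show ?case using edge by blast
    qed
    with t1W show False by simp
  qed
  have A: "\<forall>x\<in>X. tau x = t \<longrightarrow> x = t" using Wt unfolding W_def by auto
  have B: "\<forall>a\<in>TS. \<not> G a t"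
  proof (intro ballI notI)
    fix a assume a: "a \<in> TS" "G a t"
    then have "(a, t) \<in> R" using t unfolding R_def by simp
    then have "a \<in> W" using a TS_X tau_top unfolding W_def by auto
    then have "a = t" using Wt by blast
    then show False using a arc_incomp(1)[of t t] G_D ae_refl by metis
  qed
  show ?thesis using A B by blast
qed


lemma main:
  "\<exists>s. in_star_with_sink (arc c TS) TS s
           \<and> card (TS - {s}) \<ge> 2
           \<and> pivots r p c X = {s}
           \<and> antennas r p c X = {u \<in> TS. arc c TS u s}
           \<and> (\<forall>u\<in>TS - {s}. is_source G X u)
           \<and> (\<forall>w\<in>X - TS. ancestor r p s w)"
proof -
  have finX: "finite X" using finite_subset[OF XV finV] .
  have finTS: "finite TS" using finite_subset[OF _ finX] TS_X by blast
  obtain x0 where x0: "x0 \<in> X" using conn unfolding connected_on_def by blast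
  have TSne: "TS \<noteq> {}" using top_exists[OF x0] by blast
  have "Max (phi ` TS) \<in> phi ` TS" using Max_in finTS TSne by auto
  then obtain s where s: "s \<in> TS" "phi s = Max (phi ` TS)" by (metis imageE)
  have smax: "\<forall>t\<in>TS. phi t \<le> phi s" using s finTS by simp
  have sX: "s \<in> X" using TS_X s by blast
  have sink: "\<forall>w\<in>TS. \<not> G s w" using smax G_phi by (meson not_le)
  have nbr: "y \<in> TS \<and> G y s" if y: "y \<in> X" and a: "adj G s y" for y
  proof -
    from a consider "G s y" | "G y s" unfolding adj_def by blast
    then show ?thesis
    proof cases
      case 1
      show ?thesis
      proof (cases "tau y = s")
        case True
        then have "ae s y" using tau[OF y] by simp
        then show ?thesis using arc_incomp(1) G_D 1 by blast
      next
        case False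
        then have "G s (tau y)" using F3(2)[OF 1] tau_top[OF s(1)] by simp
        then show ?thesis using sink tau[OF y] by blast
      qed
    next
      case 2
      show ?thesis
      proof (cases "tau y = s")
        case True
        then have "ae s y" using tau[OF y] by simp
        then show ?thesis using arc_incomp(2) G_D 2 by blast
      next
        case False
        then have "y = tau y" using F3(1)[OF 2] tau_top[OF s(1)] by simp
        then show ?thesis using tau[OF y] 2 by simp
      qed
    qed
  qed
  have in2: "card {u\<in>TS. G u s} \<ge> 2"
  proof -
    have "2 \<le> card {u\<in>X. adj G s u}" using deg sX unfolding degree_def by blast
    also have "\<dots> \<le> card {u\<in>TS. G u s}"
      by (rule card_mono) (use finTS nbr in auto)
    finally show ?thesis .
  qed
  define Z where "Z = {x\<in>X. tau x = s} \<union> {t\<in>TS. G t s}"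
  have closed: "y \<in> Z" if x: "x \<in> Z" and y: "y \<in> X" and a: "adj G x y" for x y
  proof -
    have xX: "x \<in> X" using x TS_X unfolding Z_def by auto
    from x consider "tau x = s" | "x \<in> TS" "G x s" unfolding Z_def by blast
    then show ?thesis
    proof cases
      case 1
      from a consider "G x y" | "G y x" unfolding adj_def by blast
      then show ?thesis
      proof cases
        case 3: 1
        show ?thesis
        proof (rule ccontr)
          assume "y \<notin> Z"
          then have "tau y \<noteq> s" using y unfolding Z_def by blast
          then have "G s (tau y)" using F3(2)[OF 3] 1 by simp
          then show False using sink tau[OF y] by blast
        qed
      next
        case 4: 2
        show ?thesis
        proof (cases "tau y = s")
          case True then show ?thesis using y unfolding Z_def by blast
        next
          case False
          then have "y = tau y" "G (tau y) s" using F3[OF 4] 1 by auto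
          then show ?thesis using tau[OF y] unfolding Z_def by auto
        qed
      qed
    next
      case 2
      have xs: "x \<noteq> s" using 2 sink s by blast
      note Kx = K[OF 2(1) s(1) 2(2)]
      from a consider "G x y" | "G y x" unfolding adj_def by blast
      then show ?thesis
      proof cases
        case 3: 1
        have "tau y \<noteq> x"
        proof
          assume "tau y = x"
          then have "y = x" using Kx y by blast
          then show False using 3 arc_incomp(1) G_D ae_refl by metis
        qed
        then have "G x (tau y)" using F3(2)[OF 3] tau_top[OF 2(1)] by simp
        then have "tau y = s" using F1[OF _ 2(2)] tau[OF y] s(1) by blast
        then show ?thesis using y unfolding Z_def by blast
      next
        case 4: 2
        have "tau y \<noteq> x"
        proof
          assume "tau y = x"
          then have "y = x" using Kx y by blast
          then show False using 4 arc_incomp(1) G_D ae_refl by metis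
        qed
        then have "G (tau y) x" using F3(2)[OF 4] tau_top[OF 2(1)] by simp
        then show ?thesis using Kx tau[OF y] by blast
      qed
    qed
  qed
  have allZ: "x \<in> Z" if x: "x \<in> X" for x
  proof -
    have "(s, x) \<in> {(a, b). a \<in> X \<and> b \<in> X \<and> adj G a b}\<^sup>*"
      using conn sX x unfolding connected_on_def by blast
    then show ?thesis
    proof (induction rule: rtrancl_induct)
      case base show ?case using sX tau_top[OF s(1)] unfolding Z_def by blast
    next
      case (step y z) then show ?case using closed by blast
    qed
  qed
  have leaves: "G t s" if "t \<in> TS" "t \<noteq> s" for t
    using allZ[of t] that TS_X tau_top unfolding Z_def by auto
  have Kt: "(\<forall>x\<in>X. tau x = t \<longrightarrow> x = t) \<and> (\<forall>a\<in>TS. \<not> G a t)" if "t \<in> TS" "t \<noteq> s" for t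
    using K[OF that(1) s(1) leaves[OF that]] .
  have arcTS: "arc c TS u w \<longleftrightarrow> G u w" if "u \<in> TS" "w \<in> TS" for u w
    using that TS_X unfolding arc_def by auto
  have arcs: "arc c TS u w \<longleftrightarrow> u \<noteq> s \<and> w = s" if u: "u \<in> TS" and w: "w \<in> TS" for u w
  proof
    assume "arc c TS u w"
    then have g: "G u w" using arcTS u w by blast
    then have "u \<noteq> s" using sink w by blast
    then show "u \<noteq> s \<and> w = s" using F1[OF g leaves[OF u] w s(1)] by blast
  next
    assume "u \<noteq> s \<and> w = s"
    then show "arc c TS u w" using arcTS u w leaves by blast
  qed
  have sinks: "{v. is_sink (arc c TS) TS v} = {s}"
    unfolding is_sink_def using arcs s(1) by auto
  have card2: "card (TS - {s}) \<ge> 2"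
  proof -
    have "{u\<in>TS. G u s} \<subseteq> TS - {s}" using sink s(1) by blast
    then have "card {u\<in>TS. G u s} \<le> card (TS - {s})" using finTS by (intro card_mono) auto
    then show ?thesis using in2 by simp
  qed
  have tree: "in_tree (arc c TS) TS"
    unfolding in_tree_def
  proof (intro exI conjI)
    show "rooted_tree TS s (\<lambda>_. s)" unfolding rooted_tree_def
      using finTS s(1) by (auto intro: exI[of _ 1])
    show "\<forall>u\<in>TS. \<forall>w\<in>TS. arc c TS u w = (u \<noteq> s \<and> w = s)" using arcs by blast
  qed
  have star: "in_star_with_sink (arc c TS) TS s"
    unfolding in_star_with_sink_def adj_def using tree sinks arcs s(1) by blast
  have ex_in: "\<exists>u\<in>TS. G u s" using in2 by (metis (no_types, lifting) empty_Collect_eq card.empty not_numeral_le_zero)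
  have ant: "antennas r p c X = {u \<in> TS. arc c TS u s}"
  proof -
    have "is_source (arc c TS) TS v \<longleftrightarrow> v \<in> TS \<and> arc c TS v s" for v
    proof (cases "v = s")
      case True
      then show ?thesis unfolding is_source_def using ex_in arcTS s(1) arcs by auto
    next
      case False
      have "v \<in> TS \<Longrightarrow> arc c TS v s" using arcs[of v s] s(1) False by simp
      then show ?thesis unfolding is_source_def using Kt[of v] arcTS False by auto
    qed
    then show ?thesis unfolding antennas_def by auto
  qed
  have src: "\<forall>u\<in>TS - {s}. is_source G X u"
  proof
    fix u assume u: "u \<in> TS - {s}"
    have Ku: "(\<forall>x\<in>X. tau x = u \<longrightarrow> x = u) \<and> (\<forall>a\<in>TS. \<not> G a u)" using Kt u by blast
    show "is_source G X u" unfolding is_source_def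
    proof (intro conjI ballI notI)
      show "u \<in> X" using u TS_X by blast
    next
      fix w assume w: "w \<in> X" "G w u"
      show False
      proof (cases "tau w = u")
        case True
        then have "w = u" using Ku w by blast
        then show False using w arc_incomp(1) G_D ae_refl by metis
      next
        case False
        have tu: "tau u = u" using tau_top u by blast
        then have "w = tau w" "G (tau w) (tau u)" using F3[OF w(2)] False by auto
        then show False using Ku tau[OF w(1)] tau_top u by auto
      qed
    qed
  qed
  have anc: "\<forall>w\<in>X - TS. ancestor r p s w"
  proof
    fix w assume w: "w \<in> X - TS"
    have wV: "w \<in> V" using w XV by auto
    have "tau w = s"
    proof (rule ccontr)
      assume "tau w \<noteq> s"
      then have "w = tau w" using Kt tau w by blast
      then show False using tau w by (metis DiffD1 DiffD2)
    qed
    then have "ae s w" "s \<noteq> w" using tau w s(1) by auto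
    then show "ancestor r p s w" using ancestor_iff2[OF wV] by blast
  qed
  show ?thesis
    using star card2 sinks ant src anc unfolding pivots_def by blast
qed

end

theorem lemma4p7:
  fixes V X :: "'a set" and r :: 'a and p l :: "'a \<Rightarrow> 'a" and c :: "'a \<Rightarrow> 'a set"
  assumes "burling_tree V r p l c"
    and "X \<subseteq> V"
    and "connected_on (arc c X) X"
    and "\<forall>v\<in>X. \<not> cut_vertex (arc c X) X v"
    and "\<forall>v\<in>X. degree (arc c X) X v \<ge> 2"
  shows "\<exists>s. in_star_with_sink (arc c (top_set r p X)) (top_set r p X) s
           \<and> card (top_set r p X - {s}) \<ge> 2
           \<and> pivots r p c X = {s}
           \<and> antennas r p c X = {u \<in> top_set r p X. arc c (top_set r p X) u s}
           \<and> (\<forall>u\<in>top_set r p X - {s}. is_source (arc c X) X u)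
           \<and> (\<forall>w\<in>X - top_set r p X. ancestor r p s w)"
proof -
  interpret BTG V r p l c X
    using assms by unfold_locales auto
  show ?thesis using main .
qed

end
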